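(* Let $(L,|\cdot|)$ be a complete field with a nontrivial discrete non-Archimedean absolute value. Let $\mathcal{T}$ be the set of closed balls $\overline{B(z_0,r)}=\{z\in L:|z-z_0|\le r\}$ with $z_0\in L$ and $r\in|L^*|\cup\{0\}$ (so $L\subset\mathcal T$ via $z\mapsto\overline{B(z,0)}$), endowed with (i) the weak topology, the weakest topology making all maps $x\mapsto|Q(x)|:=\sup_{z\in x}|Q(z)|$ continuous for $Q\in L[T]$, and (ii) the strong topology, induced by the distance $d(x,x')=\max\{|\mathrm{diam}(x\vee x')-\mathrm{diam}(x)|,|\mathrm{diam}(x\vee x')-\mathrm{diam}(x')|\}$, where $\mathrm{diam}(x)=\sup_{z,z'\in x}|z-z'|$ and $x\vee x'$ is the smallest closed ball containing $x$ and $x'$. Let $F\subset L$ be a bounded infinite subset. Then either (1) the weak closure of $F$ in $\mathcal T$ is compact for the strong topology; or (2) there exists a closed ball $x\in\mathcal T$ of positive radius containing infinitely many points $x_n\in F$ such that $x_n\to x$ in the weak topology.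
   Context: Bounded means $\sup_{z\in F}|z|<\infty$. The restriction of $d$ to $L$ is the distance $|z-z'|$. *)

theory Defs
  imports "HOL-Analysis.Analysis" "HOL-Computational_Algebra.Polynomial"
begin

definition nonarch_abs :: "('a::field \<Rightarrow> real) \<Rightarrow> bool" where
  "nonarch_abs v \<longleftrightarrow>
     (\<forall>x. 0 \<le> v x) \<and> (\<forall>x. v x = 0 \<longleftrightarrow> x = 0) \<and>
     (\<forall>x y. v (x * y) = v x * v y) \<and> (\<forall>x y. v (x + y) \<le> max (v x) (v y))"

definition nontrivial_abs :: "('a::field \<Rightarrow> real) \<Rightarrow> bool" where
  "nontrivial_abs v \<longleftrightarrow> (\<exists>x. x \<noteq> 0 \<and> v x \<noteq> 1)"

definition discrete_abs :: "('a::field \<Rightarrow> real) \<Rightarrow> bool" where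
  "discrete_abs v \<longleftrightarrow> (\<exists>\<rho>. 0 < \<rho> \<and> \<rho> < 1 \<and> v ` (UNIV - {0}) = range (\<lambda>k::int. \<rho> powi k))"

definition complete_abs :: "('a::field \<Rightarrow> real) \<Rightarrow> bool" where
  "complete_abs v \<longleftrightarrow>
     (\<forall>s::nat \<Rightarrow> 'a. (\<forall>e>0. \<exists>N. \<forall>m\<ge>N. \<forall>n\<ge>N. v (s m - s n) < e) \<longrightarrow>
        (\<exists>l. \<forall>e>0. \<exists>N. \<forall>n\<ge>N. v (s n - l) < e))"

definition cball_v :: "('a::field \<Rightarrow> real) \<Rightarrow> 'a \<Rightarrow> real \<Rightarrow> 'a set" where
  "cball_v v z0 r = {z. v (z - z0) \<le> r}"

definition balls_T :: "('a::field \<Rightarrow> real) \<Rightarrow> 'a set set" where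
  "balls_T v = {cball_v v z0 r | z0 r. r \<in> v ` (UNIV - {0}) \<union> {0}}"

definition poly_abs :: "('a::field \<Rightarrow> real) \<Rightarrow> 'a poly \<Rightarrow> 'a set \<Rightarrow> real" where
  "poly_abs v Q x = Sup ((\<lambda>z. v (poly Q z)) ` x)"

definition weak_top :: "('a::field \<Rightarrow> real) \<Rightarrow> 'a set topology" where
  "weak_top v = topology_generated_by
     ({balls_T v} \<union> {{x \<in> balls_T v. poly_abs v Q x \<in> U} | Q U. open U})"

definition diam_v :: "('a::field \<Rightarrow> real) \<Rightarrow> 'a set \<Rightarrow> real" where
  "diam_v v x = Sup {v (z - z') | z z'. z \<in> x \<and> z' \<in> x}"

definition join_T :: "('a::field \<Rightarrow> real) \<Rightarrow> 'a set \<Rightarrow> 'a set \<Rightarrow> 'a set" where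
  "join_T v x x' = (THE b. b \<in> balls_T v \<and> x \<union> x' \<subseteq> b \<and>
                       (\<forall>b' \<in> balls_T v. x \<union> x' \<subseteq> b' \<longrightarrow> b \<subseteq> b'))"

definition dist_T :: "('a::field \<Rightarrow> real) \<Rightarrow> 'a set \<Rightarrow> 'a set \<Rightarrow> real" where
  "dist_T v x x' = max \<bar>diam_v v (join_T v x x') - diam_v v x\<bar>
                        \<bar>diam_v v (join_T v x x') - diam_v v x'\<bar>"

definition strong_top :: "('a::field \<Rightarrow> real) \<Rightarrow> 'a set topology" where
  "strong_top v = Metric_space.mtopology (balls_T v) (dist_T v)"

end

theory Submission
  imports Defs
begin
locale vctx =
  fixes v :: "'a::field \<Rightarrow> real" and \<rho> :: real
  assumes na: "nonarch_abs v" and rho0: "0 < \<rho>" and rho1: "\<rho> < 1"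
    and vals: "v ` (UNIV - {0}) = range (\<lambda>k::int. \<rho> powi k)"
begin

lemma vnn[simp]: "0 \<le> v x" using na unfolding nonarch_abs_def by blast
lemma v0_iff[simp]: "v x = 0 \<longleftrightarrow> x = 0" using na unfolding nonarch_abs_def by blast
lemma vmult: "v (x * y) = v x * v y" using na unfolding nonarch_abs_def by blast
lemma vadd: "v (x + y) \<le> max (v x) (v y)" using na unfolding nonarch_abs_def by blast
lemma v0[simp]: "v 0 = 0" by simp
lemma v1[simp]: "v 1 = 1"
proof -
  have "v 1 = v 1 * v 1" using vmult[of 1 1] by simp
  moreover have "v 1 \<noteq> 0" by simp
  ultimately show ?thesis by (metis mult_cancel_left1)
qed
lemma vminus1: "v (-1) = 1"
proof -
  have "v (-1) * v (-1) = 1" using vmult[of "-1" "-1"] by simp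
  moreover have "v (-1) \<ge> 0" by simp
  ultimately show ?thesis
    by (metis (no_types) abs_of_nonneg mult_1_right abs_mult_self_eq power2_eq_square real_sqrt_abs real_sqrt_one)
qed
lemma vminus[simp]: "v (- x) = v x"
  using vmult[of "-1" x] vminus1 by simp
lemma vsym: "v (a - b) = v (b - a)"
  by (metis minus_diff_eq vminus)
lemma vtri: "v (x - z) \<le> max (v (x - y)) (v (y - z))"
  using vadd[of "x - y" "y - z"] by simp
lemma vsub: "v (x - y) \<le> max (v x) (v y)"
  using vadd[of x "- y"] by simp
lemma vadd2: "v (x + y) \<le> v x + v y"
  using vadd[of x y] vnn[of x] vnn[of y] by linarith
lemma vdiff_abs: "\<bar>v x - v y\<bar> \<le> v (x - y)"
proof -
  have "v x \<le> max (v (x - y)) (v y)" using vadd[of "x - y" y] by simp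
  moreover have "v y \<le> max (v (y - x)) (v x)" using vadd[of "y - x" x] by simp
  ultimately show ?thesis using vsym[of x y] vnn[of "x-y"] vnn[of x] vnn[of y] by (smt (verit))
qed

definition "V = v ` (UNIV - {0})"

lemma V_pos: "r \<in> V \<Longrightarrow> r > 0"
  unfolding V_def by (auto, metis less_le vnn v0_iff)
lemma V_ex: "r \<in> V \<Longrightarrow> \<exists>c. v c = r"
  unfolding V_def by auto
lemma V_vals: "r \<in> V \<longleftrightarrow> (\<exists>k. r = \<rho> powi k)"
  using vals unfolding V_def by auto
lemma v_in: "v x \<in> V \<or> v x = 0"
  unfolding V_def by (cases "x = 0") auto

lemma disc1: assumes "r \<in> V" "s \<in> V \<or> s = 0" "s < r" shows "s \<le> \<rho> * r"
proof (cases "s = 0")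
  case True then show ?thesis using V_pos[OF assms(1)] rho0 by simp
next
  case False
  then obtain j k where s: "s = \<rho> powi j" and r: "r = \<rho> powi k"
    using assms V_vals by blast
  have "k < j"
  proof (rule ccontr)
    assume "\<not> k < j"
    then have "\<rho> powi k \<le> \<rho> powi j" using power_int_decreasing[of j k \<rho>] rho0 rho1 by auto
    then show False using assms(3) s r by simp
  qed
  then have "\<rho> powi j \<le> \<rho> powi (k + 1)" using power_int_decreasing[of "k+1" j \<rho>] rho0 rho1 by auto
  also have "\<dots> = \<rho> * r" using r rho0 by (simp add: power_int_add)
  finally show ?thesis using s by simp
qed

lemma disc2: assumes "r \<in> V" "s \<in> V \<or> s = 0" "s < r / \<rho>" shows "s \<le> r"
proof -
  have "r / \<rho> \<in> V"
  proof -
    obtain k where r: "r = \<rho> powi k" using assms V_vals by blast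
    have "r / \<rho> = \<rho> powi (k - 1)" using r rho0 by (simp add: power_int_diff)
    then show ?thesis using V_vals by blast
  qed
  from disc1[OF this assms(2,3)] show ?thesis using rho0 by simp
qed

lemma V_mult_rho: "r \<in> V \<Longrightarrow> \<rho> * r \<in> V"
proof -
  assume "r \<in> V"
  then obtain k where r: "r = \<rho> powi k" using V_vals by blast
  have "\<rho> * r = \<rho> powi (k + 1)" using r rho0 by (simp add: power_int_add)
  then show ?thesis using V_vals by blast
qed

lemma V_pow: "r \<in> V \<Longrightarrow> r * \<rho> ^ k \<in> V"
  by (induction k) (auto simp: V_mult_rho mult.left_commute)

lemma V_large: "\<exists>R\<in>V. M \<le> R"
proof -
  have "1 < 1 / \<rho>" using rho0 rho1 by simp
  then obtain n where n: "M < (1/\<rho>) ^ n" using real_arch_pow by blast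
  have "(1/\<rho>) ^ n = \<rho> powi (- int n)" by (simp add: power_int_minus power_divide inverse_eq_divide)
  then show ?thesis using n V_vals by (metis less_le)
qed

end

context vctx begin

abbreviation "cb \<equiv> cball_v v"

lemma in_cb: "z \<in> cb a r \<longleftrightarrow> v (z - a) \<le> r" by (simp add: cball_v_def)

lemma cb0: "cb a 0 = {a}"
proof -
  have "(v (z - a) \<le> 0) = (z = a)" for z
  proof -
    have "(v (z - a) \<le> 0) = (v (z - a) = 0)" using vnn[of "z - a"] by linarith
    then show ?thesis by simp
  qed
  then show ?thesis unfolding cball_v_def by auto
qed

lemma centre_in: "r \<ge> 0 \<Longrightarrow> a \<in> cb a r" by (simp add: in_cb)

lemma V0_nonneg: "r \<in> V \<or> r = 0 \<Longrightarrow> r \<ge> 0" by (metis V_pos less_imp_le order_refl)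

lemma balls_T_iff: "x \<in> balls_T v \<longleftrightarrow> (\<exists>a r. x = cb a r \<and> (r \<in> V \<or> r = 0))"
  unfolding balls_T_def V_def by auto

lemma sing_in_T: "{a} \<in> balls_T v"
  using balls_T_iff cb0 by metis

lemma cb_subset: assumes "r \<le> t" "v (a - c) \<le> t" shows "cb a r \<subseteq> cb c t"
proof
  fix z assume "z \<in> cb a r"
  then have "v (z - a) \<le> r" by (simp add: in_cb)
  moreover have "v (z - c) \<le> max (v (z - a)) (v (a - c))" by (rule vtri)
  ultimately show "z \<in> cb c t" using assms by (simp add: in_cb)
qed

lemma cb_subsetD:
  assumes "cb a r \<subseteq> cb c t" "r \<in> V \<or> r = 0" "t \<ge> 0"
  shows "r \<le> t \<and> v (a - c) \<le> t"
proof -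
  have "a \<in> cb a r" using centre_in V0_nonneg[OF assms(2)] by simp
  then have ac: "v (a - c) \<le> t" using assms(1) in_cb by blast
  have "r \<le> t"
  proof (cases "r = 0")
    case False
    then obtain e where e: "v e = r" using V_ex assms(2) by blast
    have "a + e \<in> cb a r" using e by (simp add: in_cb)
    then have "v (a + e - c) \<le> t" using assms(1) in_cb by blast
    moreover have "v e \<le> max (v (a + e - c)) (v (a - c))"
    proof -
      have "v ((a + e) - a) \<le> max (v ((a + e) - c)) (v (c - a))" by (rule vtri)
      then show ?thesis using vsym[of c a] by simp
    qed
    ultimately show ?thesis using ac e by simp
  qed (use assms in auto)
  then show ?thesis using ac by simp
qed

lemma cb_eq: "r \<in> V \<or> r = 0 \<Longrightarrow> s \<in> V \<or> s = 0 \<Longrightarrow> cb a r = cb b s \<Longrightarrow> r = s"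
  using cb_subsetD[of a r b s] cb_subsetD[of b s a r] V0_nonneg by fastforce

lemma diam_cb: assumes "r \<in> V \<or> r = 0" shows "diam_v v (cb a r) = r"
proof -
  have le: "\<forall>y \<in> {v (z - z') | z z'. z \<in> cb a r \<and> z' \<in> cb a r}. y \<le> r"
  proof safe
    fix z z' assume "z \<in> cb a r" "z' \<in> cb a r"
    then have "v (z - a) \<le> r" "v (a - z') \<le> r" by (simp_all add: in_cb vsym[of a])
    moreover have "v (z - z') \<le> max (v (z - a)) (v (a - z'))" by (rule vtri)
    ultimately show "v (z - z') \<le> r" by simp
  qed
  obtain e where e: "v e = r"
  proof (cases "r = 0")
    case True then show ?thesis using that[of 0] by simp
  next
    case False then show ?thesis using that assms V_ex by blast
  qed
  have "r \<in> {v (z - z') | z z'. z \<in> cb a r \<and> z' \<in> cb a r}"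
  proof -
    have "r = v ((a + e) - a) \<and> a + e \<in> cb a r \<and> a \<in> cb a r"
      using e V0_nonneg[OF assms] by (simp add: in_cb)
    then show ?thesis by blast
  qed
  then show ?thesis unfolding diam_v_def using le by (intro cSup_eq_maximum) auto
qed

lemma join_cb:
  assumes r: "r \<in> V \<or> r = 0" and s: "s \<in> V \<or> s = 0"
  shows "join_T v (cb a r) (cb b s) = cb a (max r (max s (v (a - b))))"
proof -
  define R where "R = max r (max s (v (a - b)))"
  have "R \<in> {r, s, v (a - b)}" unfolding R_def max_def by (simp split: if_split)
  then have RV: "R \<in> V \<or> R = 0" using r s v_in[of "a - b"] by blast
  have Rge: "r \<le> R" "s \<le> R" "v (a - b) \<le> R" unfolding R_def by simp_all
  have R0: "R \<ge> 0" using RV V0_nonneg by blast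
  have mem: "cb a R \<in> balls_T v" using RV balls_T_iff by blast
  have cont: "cb a r \<union> cb b s \<subseteq> cb a R"
    using cb_subset[of r R a a] cb_subset[of s R b a] R0 vsym[of a b] Rge by simp
  have least: "cb a R \<subseteq> b'" if b'T: "b' \<in> balls_T v" and sub: "cb a r \<union> cb b s \<subseteq> b'" for b'
  proof -
    obtain c t where b': "b' = cb c t" "t \<in> V \<or> t = 0" using b'T unfolding balls_T_iff by (elim exE conjE) simp
    have t0: "t \<ge> 0" using b' V0_nonneg by blast
    have "cb a r \<subseteq> cb c t" "cb b s \<subseteq> cb c t" using sub unfolding b'(1) by simp_all
    then have 1: "r \<le> t \<and> v (a - c) \<le> t" and 2: "s \<le> t \<and> v (b - c) \<le> t"
      using cb_subsetD r s t0 by blast+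
    have "v (a - b) \<le> t" using vtri[of a b c] 1 2 vsym[of b c] by (smt (verit))
    then have "R \<le> t" using 1 2 unfolding R_def by simp
    then show ?thesis using cb_subset[OF \<open>R \<le> t\<close>, of a c] 1 b'(1) by simp
  qed
  show ?thesis
    unfolding join_T_def R_def[symmetric]
  proof (rule the_equality)
    show "cb a R \<in> balls_T v \<and> cb a r \<union> cb b s \<subseteq> cb a R \<and>
      (\<forall>b'\<in>balls_T v. cb a r \<union> cb b s \<subseteq> b' \<longrightarrow> cb a R \<subseteq> b')"
      using mem cont least by (intro conjI ballI impI)
    fix bb assume H: "bb \<in> balls_T v \<and> cb a r \<union> cb b s \<subseteq> bb \<and>
      (\<forall>b'\<in>balls_T v. cb a r \<union> cb b s \<subseteq> b' \<longrightarrow> bb \<subseteq> b')"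
    then have "bb \<subseteq> cb a R" using mem cont by simp
    moreover have "cb a R \<subseteq> bb" using H least by simp
    ultimately show "bb = cb a R" by (rule subset_antisym)
  qed
qed

lemma dist_cb:
  assumes r: "r \<in> V \<or> r = 0" and s: "s \<in> V \<or> s = 0"
  shows "dist_T v (cb a r) (cb b s) = max (max r (max s (v (a - b))) - r) (max r (max s (v (a - b))) - s)"
proof -
  define R where "R = max r (max s (v (a - b)))"
  have "R \<in> {r, s, v (a - b)}" unfolding R_def max_def by (simp split: if_split)
  then have RV: "R \<in> V \<or> R = 0" using r s v_in[of "a - b"] by blast
  have Rge: "r \<le> R" "s \<le> R" "v (a - b) \<le> R" unfolding R_def by simp_all
  show ?thesis
    unfolding dist_T_def join_cb[OF r s] R_def[symmetric] diam_cb[OF RV] diam_cb[OF r] diam_cb[OF s]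
    using Rge by simp
qed

lemma dist_sing: "dist_T v {a} {b} = v (a - b)"
  using dist_cb[of 0 0 a b] by (simp add: cb0)

lemma strong_metric: "Metric_space (balls_T v) (dist_T v)"
proof
  fix x y
  show "0 \<le> dist_T v x y" unfolding dist_T_def by simp
  show "dist_T v x y = dist_T v y x" proof -
    have "join_T v x y = join_T v y x" by (simp only: join_T_def Un_commute)
    then show ?thesis unfolding dist_T_def by (simp add: max.commute)
  qed
next
  fix x y assume xT: "x \<in> balls_T v" and yT: "y \<in> balls_T v"
  obtain a r where x: "x = cb a r" "r \<in> V \<or> r = 0" using xT unfolding balls_T_iff by (elim exE conjE) simp
  obtain b s where y: "y = cb b s" "s \<in> V \<or> s = 0" using yT unfolding balls_T_iff by (elim exE conjE) simp
  show "dist_T v x y = 0 \<longleftrightarrow> x = y"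
  proof
    assume "dist_T v x y = 0"
    then have "max (max r (max s (v (a - b))) - r) (max r (max s (v (a - b))) - s) = 0"
      using dist_cb[OF x(2) y(2)] x y by simp
    then have "r = s" "v (a - b) \<le> r" by (smt (verit))+
    then have "cb a r \<subseteq> cb b s" "cb b s \<subseteq> cb a r" using cb_subset[of r s a b] cb_subset[of s r b a] vsym[of a b] by auto
    then show "x = y" unfolding x y by (rule subset_antisym)
  next
    assume "x = y"
    then have "r = s" using cb_eq[OF x(2) y(2)] x y by simp
    then show "dist_T v x y = 0" using dist_cb[OF x(2) x(2), of a a] \<open>x = y\<close> x V0_nonneg[OF x(2)] by simp
  qed
next
  fix x y z assume xT: "x \<in> balls_T v" and yT: "y \<in> balls_T v" and zT: "z \<in> balls_T v"
  obtain a r where x: "x = cb a r" "r \<in> V \<or> r = 0" using xT unfolding balls_T_iff by (elim exE conjE) simp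
  obtain b s where y: "y = cb b s" "s \<in> V \<or> s = 0" using yT unfolding balls_T_iff by (elim exE conjE) simp
  obtain c t where z: "z = cb c t" "t \<in> V \<or> t = 0" using zT unfolding balls_T_iff by (elim exE conjE) simp
  have r0: "r \<ge> 0" "s \<ge> 0" "t \<ge> 0" using x y z V0_nonneg by auto
  have u: "v (a - c) \<le> max (v (a - b)) (v (b - c))" by (rule vtri)
  show "dist_T v x z \<le> dist_T v x y + dist_T v y z"
    unfolding x y z dist_cb[OF x(2) y(2)] dist_cb[OF y(2) z(2)] dist_cb[OF x(2) z(2)]
    using u r0 vnn[of "a - b"] vnn[of "b - c"] vnn[of "a - c"] by (smt (verit))
qed

end

lemma limitin_gen:
  assumes "l \<in> \<Union>S" "\<And>U. U \<in> S \<Longrightarrow> l \<in> U \<Longrightarrow> eventually (\<lambda>n. f n \<in> U) F"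
  shows "limitin (topology_generated_by S) f l F"
proof -
  have "generate_topology_on S U \<Longrightarrow> l \<in> U \<Longrightarrow> eventually (\<lambda>n. f n \<in> U) F" for U
  proof (induction rule: generate_topology_on.induct)
    case Empty then show ?case by simp
  next
    case (Int a b) then show ?case by (auto intro: eventually_conj)
  next
    case (UN K)
    then obtain k where "k \<in> K" "l \<in> k" by blast
    then have "eventually (\<lambda>n. f n \<in> k) F" using UN by blast
    then show ?case by (rule eventually_mono) (use \<open>k \<in> K\<close> in blast)
  next
    case (Basis s) then show ?case using assms by blast
  qed
  then show ?thesis unfolding limitin_def using assms(1) openin_topology_generated_by by auto
qed

context vctx begin
lemma poly_bound:
  assumes "r > 0" "finite P" "P \<subseteq> cb z0 r" "\<forall>p\<in>P. \<forall>q\<in>P. p \<noteq> q \<longrightarrow> v (p - q) = r"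
    "degree Q < card P" "\<forall>p\<in>P. v (poly Q p) \<le> m" "z \<in> cb z0 r"
  shows "v (poly Q z) \<le> m"
  using assms(2-6)
proof (induction "degree Q" arbitrary: Q P m)
  case 0
  then obtain p where p: "p \<in> P" by fastforce
  obtain c where "Q = [:c:]" using degree0_coeffs[OF 0(1)[symmetric]] by blast
  then show ?case using 0 p by auto
next
  case (Suc d)
  then obtain p where p: "p \<in> P" by fastforce
  define R where "R = synthetic_div Q p"
  have dR: "d = degree R" unfolding R_def degree_synthetic_div using Suc(2) by simp
  have Qeq: "poly Q y = (y - p) * poly R y + poly Q p" for y
  proof -
    have "poly ([:-p, 1:] * R + [:poly Q p:]) y = poly Q y"
      unfolding R_def synthetic_div_correct' by simp
    then show ?thesis by (simp add: algebra_simps)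
  qed
  have m0: "m \<ge> 0" using Suc(7) p by (meson order.trans vnn)
  have Rb: "\<forall>q\<in>P - {p}. v (poly R q) \<le> m / r"
  proof
    fix q assume q: "q \<in> P - {p}"
    have vqp: "v (q - p) = r" using Suc(5) q p by auto
    have "v (poly Q q - poly Q p) = r * v (poly R q)" using Qeq[of q] vqp by (simp add: vmult)
    moreover have "v (poly Q q - poly Q p) \<le> m"
    proof -
      have "v (poly Q q) \<le> m" "v (poly Q p) \<le> m" using Suc(7) q p by auto
      then show ?thesis using vsub[of "poly Q q" "poly Q p"] by simp
    qed
    ultimately show "v (poly R q) \<le> m / r" using assms(1) by (simp add: field_simps mult.commute)
  qed
  have cP: "card (P - {p}) = card P - 1" using p Suc(3) by simp
  have "v (poly R z) \<le> m / r"
  proof (rule Suc(1)[OF dR])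
    show "finite (P - {p})" using Suc(3) by simp
    show "P - {p} \<subseteq> cb z0 r" using Suc(4) by blast
    show "\<forall>pa\<in>P - {p}. \<forall>q\<in>P - {p}. pa \<noteq> q \<longrightarrow> v (pa - q) = r" using Suc(5) by blast
    show "degree R < card (P - {p})" using cP Suc(6) Suc(2) dR by linarith
    show "\<forall>pa\<in>P - {p}. v (poly R pa) \<le> m / r" by (rule Rb)
  qed
  moreover have "v (z - p) \<le> r"
  proof -
    have "v (z - z0) \<le> r" "v (z0 - p) \<le> r" using assms(7) Suc(4) p by (auto simp: in_cb vsym[of z0 p] subset_iff)
    then show ?thesis using vtri[of z p z0] by simp
  qed
  ultimately have "v (z - p) * v (poly R z) \<le> r * (m / r)"
    using assms(1) by (intro mult_mono) auto
  then have "v ((z - p) * poly R z) \<le> m"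
    unfolding vmult using assms(1) by simp
  moreover have "v (poly Q p) \<le> m" using Suc(7) p by blast
  ultimately show ?case using Qeq[of z] vadd[of "(z - p) * poly R z" "poly Q p"] by simp
qed

end

context vctx begin
lemma poly_lip: "\<exists>K\<ge>0. \<forall>z. v (z - w) \<le> 1 \<longrightarrow> v (poly Q z - poly Q w) \<le> K * v (z - w)"
proof (induction Q rule: pCons_induct)
  case 0 then show ?case by auto
next
  case (pCons c p)
  then obtain K where K: "K \<ge> 0" "\<forall>z. v (z - w) \<le> 1 \<longrightarrow> v (poly p z - poly p w) \<le> K * v (z - w)" by blast
  show ?case
  proof (intro exI[of _ "(1 + v w) * K + v (poly p w)"] conjI allI impI)
    show "0 \<le> (1 + v w) * K + v (poly p w)" using K by simp
    fix z assume z: "v (z - w) \<le> 1"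
    have eq: "poly (pCons c p) z - poly (pCons c p) w = z * (poly p z - poly p w) + (z - w) * poly p w"
      by (simp add: algebra_simps)
    have vz: "v z \<le> 1 + v w" using vadd2[of "z - w" w] z by simp
    have "v (z * (poly p z - poly p w)) \<le> (1 + v w) * (K * v (z - w))"
      unfolding vmult using K z vz by (intro mult_mono) auto
    moreover have "v ((z - w) * poly p w) = v (poly p w) * v (z - w)" by (simp add: vmult)
    ultimately show "v (poly (pCons c p) z - poly (pCons c p) w) \<le> ((1 + v w) * K + v (poly p w)) * v (z - w)"
      unfolding eq using vadd2[of "z * (poly p z - poly p w)" "(z - w) * poly p w"]
      by (simp add: algebra_simps)
  qed
qed

end

context vctx begin
lemma poly_cont:
  assumes "e > 0"
  shows "\<exists>\<delta>>0. \<forall>z. v (z - w) < \<delta> \<longrightarrow> \<bar>v (poly Q z) - v (poly Q w)\<bar> < e"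
proof -
  obtain K where K: "K \<ge> 0" "\<forall>z. v (z - w) \<le> 1 \<longrightarrow> v (poly Q z - poly Q w) \<le> K * v (z - w)"
    using poly_lip by blast
  show ?thesis
  proof (intro exI[of _ "min 1 (e / (K + 1))"] conjI allI impI)
    show "0 < min 1 (e / (K + 1))" using assms K by simp
    fix z assume z: "v (z - w) < min 1 (e / (K + 1))"
    then have "v (poly Q z - poly Q w) \<le> K * v (z - w)" using K by simp
    also have "\<dots> \<le> (K + 1) * v (z - w)" by (simp add: algebra_simps)
    also have "\<dots> < (K + 1) * (e / (K + 1))" using z K by (intro mult_strict_left_mono) auto
    also have "\<dots> = e" using K by simp
    finally show "\<bar>v (poly Q z) - v (poly Q w)\<bar> < e"
      using vdiff_abs[of "poly Q z" "poly Q w"] by simp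
  qed
qed

end

context vctx begin
definition "Sb Q U = {x \<in> balls_T v. poly_abs v Q x \<in> U}"

end

context vctx begin
abbreviation "Gen \<equiv> {balls_T v} \<union> {{x \<in> balls_T v. poly_abs v Q x \<in> U} | Q U. open U}"

end

context vctx begin
lemma weak_eq: "weak_top v = topology_generated_by Gen" unfolding weak_top_def ..

end

context vctx begin
lemma open_Sb: "open U \<Longrightarrow> openin (weak_top v) (Sb Q U)"
  unfolding weak_eq Sb_def by (rule topology_generated_by_Basis) blast

end

context vctx begin
lemma topspace_weak: "topspace (weak_top v) = balls_T v"
  unfolding weak_eq topology_generated_by_topspace by blast

end

context vctx begin
lemma poly_abs_sing[simp]: "poly_abs v Q {z} = v (poly Q z)"
  by (simp add: poly_abs_def)

end

context vctx begin
lemma poly_abs_lin: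
  assumes "r \<in> V" "a \<in> cb z0 r"
  shows "poly_abs v [:-a, 1:] (cb z0 r) = r"
proof -
  obtain e where e: "v e = r" using V_ex assms by blast
  have le: "\<forall>y\<in>(\<lambda>z. v (poly [:-a, 1:] z)) ` cb z0 r. y \<le> r"
  proof
    fix y assume "y \<in> (\<lambda>z. v (poly [:-a, 1:] z)) ` cb z0 r"
    then obtain z where z: "z \<in> cb z0 r" "y = v (z - a)" by auto
    have "v (z - a) \<le> max (v (z - z0)) (v (z0 - a))" by (rule vtri)
    then show "y \<le> r" using z assms by (simp add: in_cb vsym[of z0 a])
  qed
  have "a + e \<in> cb z0 r"
  proof -
    have "v (a + e - z0) \<le> max (v (a - z0)) (v e)" using vadd[of "a - z0" e] by (simp add: algebra_simps)
    then show ?thesis using assms e by (simp add: in_cb)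
  qed
  then have "r \<in> (\<lambda>z. v (poly [:-a, 1:] z)) ` cb z0 r"
    using e by (intro image_eqI[of _ _ "a + e"]) auto
  then show ?thesis unfolding poly_abs_def using le by (intro cSup_eq_maximum) auto
qed

end

context vctx begin
lemma sing_nbhd:
  assumes "generate_topology_on Gen U" "{w} \<in> U"
  shows "\<exists>\<delta>>0. \<forall>z. v (z - w) < \<delta> \<longrightarrow> {z} \<in> U"
  using assms
proof (induction arbitrary: w rule: generate_topology_on.induct)
  case Empty then show ?case by simp
next
  case (Int a b)
  have "{w} \<in> a" "{w} \<in> b" using Int.prems by auto
  then obtain d1 d2 where "d1 > 0" "\<forall>z. v (z - w) < d1 \<longrightarrow> {z} \<in> a" "d2 > 0" "\<forall>z. v (z - w) < d2 \<longrightarrow> {z} \<in> b"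
    using Int.IH by metis
  then show ?case by (intro exI[of _ "min d1 d2"]) auto
next
  case (UN K)
  then obtain k where "k \<in> K" "{w} \<in> k" by blast
  then obtain d where "d > 0" "\<forall>z. v (z - w) < d \<longrightarrow> {z} \<in> k" using UN by blast
  then show ?case using \<open>k \<in> K\<close> by blast
next
  case (Basis s)
  show ?case
  proof (cases "s = balls_T v")
    case True then show ?thesis using sing_in_T by (intro exI[of _ 1]) auto
  next
    case False
    then obtain Q U where s: "s = {x \<in> balls_T v. poly_abs v Q x \<in> U}" "open U" using Basis by blast
    then have "v (poly Q w) \<in> U" using Basis by simp
    then obtain e where e: "e > 0" "ball (v (poly Q w)) e \<subseteq> U" using s(2) open_contains_ball by blast
    obtain d where d: "d > 0" "\<forall>z. v (z - w) < d \<longrightarrow> \<bar>v (poly Q z) - v (poly Q w)\<bar> < e"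
      using poly_cont[OF e(1)] by blast
    show ?thesis
    proof (intro exI[of _ d] conjI allI impI)
      fix z assume "v (z - w) < d"
      then have "\<bar>v (poly Q z) - v (poly Q w)\<bar> < e" using d by blast
      then have "v (poly Q z) \<in> ball (v (poly Q w)) e" by (simp add: dist_real_def abs_minus_commute)
      then show "{z} \<in> s" using s e sing_in_T by auto
    qed (use d in auto)
  qed
qed


end

context vctx begin

lemma diam_le: "z \<in> cb z0 r \<Longrightarrow> z' \<in> cb z0 r \<Longrightarrow> v (z - z') \<le> r"
proof -
  assume "z \<in> cb z0 r" "z' \<in> cb z0 r"
  then have "v (z - z0) \<le> r" "v (z0 - z') \<le> r" by (simp_all add: in_cb vsym[of z0 z'])
  moreover have "v (z - z') \<le> max (v (z - z0)) (v (z0 - z'))" by (rule vtri)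
  ultimately show ?thesis by simp
qed

lemma ev_eq:
  assumes r: "r \<in> V" and xs: "inj xs" "\<forall>n. xs n \<in> cb z0 r" "\<forall>m n. m \<noteq> n \<longrightarrow> v (xs m - xs n) = r"
  shows "eventually (\<lambda>n. v (poly Q (xs n)) = poly_abs v Q (cb z0 r)) sequentially"
proof -
  have r0: "r > 0" using V_pos r by simp
  define d where "d = degree Q"
  have bound: "v (poly Q z) \<le> Max ((\<lambda>p. v (poly Q p)) ` xs ` B)"
    if "finite B" "card B = Suc d" "z \<in> cb z0 r" for B z
  proof (rule poly_bound[OF r0, of "xs ` B" z0])
    show "finite (xs ` B)" using that by simp
    show "xs ` B \<subseteq> cb z0 r" using xs by auto
    show "\<forall>p\<in>xs ` B. \<forall>q\<in>xs ` B. p \<noteq> q \<longrightarrow> v (p - q) = r" using xs(3) by (auto, metis)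
    have "card (xs ` B) = card B" using xs(1) by (simp add: card_image inj_on_subset)
    then show "degree Q < card (xs ` B)" using that d_def by simp
    show "\<forall>p\<in>xs ` B. v (poly Q p) \<le> Max ((\<lambda>p. v (poly Q p)) ` xs ` B)" using that by simp
  qed (use that in auto)
  let ?S = "(\<lambda>z. v (poly Q z)) ` cb z0 r"
  define M where "M = poly_abs v Q (cb z0 r)"
  have M: "M = Sup ?S" unfolding M_def poly_abs_def ..
  have bdd: "bdd_above ?S"
    using bound[of "{..d}"] unfolding bdd_above_def by auto
  have ne: "cb z0 r \<noteq> {}" using centre_in[of r z0] r0 by auto
  have upper: "v (poly Q (xs n)) \<le> M" for n
    unfolding M using bdd xs(2) by (intro cSup_upper) auto
  have fin: "finite {n. v (poly Q (xs n)) < M}"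
  proof (rule ccontr)
    assume "infinite {n. v (poly Q (xs n)) < M}"
    then obtain B where B: "finite B" "card B = Suc d" "B \<subseteq> {n. v (poly Q (xs n)) < M}"
      using infinite_arbitrarily_large by blast
    have Bne: "B \<noteq> {}" using B by auto
    have "Max ((\<lambda>p. v (poly Q p)) ` xs ` B) < M"
      using B Bne by (subst Max_less_iff) auto
    moreover have "M \<le> Max ((\<lambda>p. v (poly Q p)) ` xs ` B)"
      unfolding M using ne bound[OF B(1,2)] by (intro cSup_least) auto
    ultimately show False by simp
  qed
  then have "eventually (\<lambda>n. \<not> v (poly Q (xs n)) < M) sequentially"
    unfolding cofinite_eq_sequentially[symmetric] eventually_cofinite by simp
  then show ?thesis
    by (rule eventually_mono) (use upper M_def in \<open>simp add: not_less order.antisym\<close>)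
qed

lemma case2:
  assumes r: "r \<in> V" and xs: "inj xs" "\<forall>n. xs n \<in> cb z0 r" "\<forall>m n. m \<noteq> n \<longrightarrow> v (xs m - xs n) = r"
  shows "limitin (weak_top v) (\<lambda>n. {xs n}) (cb z0 r) sequentially"
  unfolding weak_eq
proof (rule limitin_gen)
  have "cb z0 r \<in> balls_T v" using r balls_T_iff by blast
  then show "cb z0 r \<in> \<Union> Gen" by blast
  fix U assume U: "U \<in> Gen" "cb z0 r \<in> U"
  show "\<forall>\<^sub>F n in sequentially. {xs n} \<in> U"
  proof (cases "U = balls_T v")
    case True then show ?thesis using sing_in_T by simp
  next
    case False
    then obtain Q W where UW: "U = {x \<in> balls_T v. poly_abs v Q x \<in> W}" using U by blast
    have W: "poly_abs v Q (cb z0 r) \<in> W" using U(2) UW by simp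
    show ?thesis
      using ev_eq[OF r xs, of Q]
    proof (rule eventually_mono)
      fix n assume "v (poly Q (xs n)) = poly_abs v Q (cb z0 r)"
      then show "{xs n} \<in> U" using W UW sing_in_T by simp
    qed
  qed
qed

end

context vctx begin

definition C2 :: "'a set \<Rightarrow> bool" where "C2 Fs \<longleftrightarrow> (\<exists>z0 r xs. r \<in> V \<and> inj xs \<and> (\<forall>n::nat. xs n \<in> Fs \<and> xs n \<in> cb z0 r) \<and>
   (\<forall>m n. m \<noteq> n \<longrightarrow> v (xs m - xs n) = r))"

lemma lemA:
  assumes nc: "\<not> C2 F" and r: "r \<in> V"
  shows "\<exists>A. finite A \<and> A \<subseteq> F \<inter> cb z0 r \<and> (\<forall>z\<in>F \<inter> cb z0 r. \<exists>a\<in>A. v (z - a) < r)"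
proof (rule ccontr)
  assume H: "\<not> ?thesis"
  define step where "step S = (SOME z. z \<in> F \<inter> cb z0 r \<and> (\<forall>a\<in>S. r \<le> v (z - a)))" for S
  have step: "step S \<in> F \<inter> cb z0 r \<and> (\<forall>a\<in>S. r \<le> v (step S - a))"
    if "finite S" "S \<subseteq> F \<inter> cb z0 r" for S
  proof -
    have "\<exists>z. z \<in> F \<inter> cb z0 r \<and> (\<forall>a\<in>S. r \<le> v (z - a))"
      using H that by (meson not_le)
    then show ?thesis unfolding step_def by (rule someI_ex)
  qed
  define H where "H n = rec_nat {} (\<lambda>_ S. insert (step S) S) n" for n
  have H0: "H 0 = {}" and HS: "H (Suc n) = insert (step (H n)) (H n)" for n
    unfolding H_def by simp_all
  define xs where "xs n = step (H n)" for n
  have Hprop: "finite (H n) \<and> H n \<subseteq> F \<inter> cb z0 r \<and> H n = xs ` {..<n}" for n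
  proof (induction n)
    case 0 then show ?case using H0 by simp
  next
    case (Suc n)
    then have "step (H n) \<in> F \<inter> cb z0 r" using step by blast
    then show ?case using Suc HS[of n] unfolding xs_def by (auto simp: lessThan_Suc)
  qed
  have xsF: "xs n \<in> F \<and> xs n \<in> cb z0 r" for n
    using step[of "H n"] Hprop[of n] unfolding xs_def by blast
  have far: "r \<le> v (xs n - xs m)" if "m < n" for m n
  proof -
    have "xs m \<in> H n" using Hprop[of n] that by auto
    then show ?thesis using step[of "H n"] Hprop[of n] unfolding xs_def by blast
  qed
  have dist: "v (xs m - xs n) = r" if "m \<noteq> n" for m n
  proof -
    have "r \<le> v (xs m - xs n)"
      using that far[of m n] far[of n m] vsym[of "xs m" "xs n"] by (cases "m < n") auto
    moreover have "v (xs m - xs n) \<le> r" using diam_le xsF by blast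
    ultimately show ?thesis by simp
  qed
  have "inj xs"
  proof (rule injI)
    fix m n assume "xs m = xs n"
    then show "m = n" using dist[of m n] V_pos[OF r] by (cases "m = n") auto
  qed
  then have "C2 F" unfolding C2_def using r xsF dist by blast
  then show False using nc by simp
qed

lemma net:
  assumes nc: "\<not> C2 F" and R: "R \<in> V" and bd: "\<forall>z\<in>F. v z \<le> R"
  shows "\<exists>A. finite A \<and> A \<subseteq> F \<and> (\<forall>z\<in>F. \<exists>a\<in>A. v (z - a) \<le> R * \<rho> ^ k)"
proof (induction k)
  case 0
  show ?case
  proof (cases "F = {}")
    case True then show ?thesis by auto
  next
    case False
    then obtain a where a: "a \<in> F" by blast
    have "v (z - a) \<le> R" if "z \<in> F" for z
    proof -
      have "v z \<le> R" "v a \<le> R" using bd a that by auto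
      then show ?thesis using vsub[of z a] by simp
    qed
    then show ?thesis using a by (intro exI[of _ "{a}"]) auto
  qed
next
  case (Suc k)
  then obtain A where A: "finite A" "A \<subseteq> F" "\<forall>z\<in>F. \<exists>a\<in>A. v (z - a) \<le> R * \<rho> ^ k" by blast
  have Rk: "R * \<rho> ^ k \<in> V" using V_pow R by blast
  have "\<forall>a. \<exists>A'. finite A' \<and> A' \<subseteq> F \<inter> cb a (R * \<rho> ^ k) \<and>
     (\<forall>z\<in>F \<inter> cb a (R * \<rho> ^ k). \<exists>b\<in>A'. v (z - b) < R * \<rho> ^ k)"
    using lemA[OF nc Rk] by blast
  then obtain g where g: "\<And>a. finite (g a) \<and> g a \<subseteq> F \<inter> cb a (R * \<rho> ^ k) \<and>
     (\<forall>z\<in>F \<inter> cb a (R * \<rho> ^ k). \<exists>b\<in>g a. v (z - b) < R * \<rho> ^ k)" by metis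
  show ?case
  proof (intro exI[of _ "\<Union> (g ` A)"] conjI ballI)
    show "finite (\<Union> (g ` A))" using A(1) g by blast
    show "\<Union> (g ` A) \<subseteq> F" using g by blast
    fix z assume z: "z \<in> F"
    then obtain a where a: "a \<in> A" "v (z - a) \<le> R * \<rho> ^ k" using A(3) by blast
    then have "z \<in> F \<inter> cb a (R * \<rho> ^ k)" using z by (simp add: in_cb)
    then obtain b where b: "b \<in> g a" "v (z - b) < R * \<rho> ^ k" using g by blast
    then have "v (z - b) \<le> \<rho> * (R * \<rho> ^ k)" using disc1[OF Rk v_in] by blast
    then show "\<exists>b\<in>\<Union> (g ` A). v (z - b) \<le> R * \<rho> ^ Suc k"
      using a b by (auto simp: algebra_simps)
  qed
qed

end

context vctx begin

lemma poly_lin[simp]: "poly [:-a, 1:] z = z - (a::'a)" by (simp add: algebra_simps)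

sublocale L: Metric_space UNIV "\<lambda>a b. v (a - b)"
proof
  fix x y z :: 'a
  show "0 \<le> v (x - y)" by simp
  show "v (x - y) = v (y - x)" by (rule vsym)
  show "v (x - y) = 0 \<longleftrightarrow> x = y" by simp
  have "v (x - z) \<le> max (v (x - y)) (v (y - z))" by (rule vtri)
  then show "v (x - z) \<le> v (x - y) + v (y - z)" using vnn[of "x - y"] vnn[of "y - z"] by linarith
qed

lemma tb:
  assumes nc: "\<not> C2 F" and bd: "\<exists>M. \<forall>z\<in>F. v z \<le> M"
  shows "L.mtotally_bounded F"
  unfolding L.mtotally_bounded_def
proof (intro allI impI)
  fix e :: real assume e: "e > 0"
  obtain M where M: "\<forall>z\<in>F. v z \<le> M" using bd by blast
  obtain R where R: "R \<in> V" "M \<le> R" using V_large by blast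
  have R0: "R > 0" using V_pos R by blast
  obtain k where k: "\<rho> ^ k < e / R" using real_arch_pow_inv[of "e / R" \<rho>] e R0 rho1 by auto
  have k': "R * \<rho> ^ k < e" using k R0 by (simp add: field_simps mult.commute)
  obtain A where A: "finite A" "A \<subseteq> F" "\<forall>z\<in>F. \<exists>a\<in>A. v (z - a) \<le> R * \<rho> ^ k"
    using net[OF nc R(1), of k] M R(2) by fastforce
  show "\<exists>K. finite K \<and> K \<subseteq> F \<and> F \<subseteq> (\<Union>x\<in>K. L.mball x e)"
  proof (intro exI[of _ A] conjI subsetI)
    fix z assume "z \<in> F"
    then obtain a where "a \<in> A" "v (z - a) \<le> R * \<rho> ^ k" using A by blast
    then show "z \<in> (\<Union>x\<in>A. L.mball x e)" using k' vsym[of z a] by force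
  qed (use A in auto)
qed

lemma mcompl:
  assumes "complete_abs v"
  shows "L.mcomplete"
  unfolding L.mcomplete_def
proof (intro allI impI)
  fix \<sigma> :: "nat \<Rightarrow> 'a" assume "L.MCauchy \<sigma>"
  then have "\<forall>e>0. \<exists>N. \<forall>m\<ge>N. \<forall>n\<ge>N. v (\<sigma> m - \<sigma> n) < e" unfolding L.MCauchy_def by simp
  then obtain l where l: "\<forall>e>0. \<exists>N. \<forall>n\<ge>N. v (\<sigma> n - l) < e"
    using assms unfolding complete_abs_def by blast
  show "\<exists>x. limitin L.mtopology \<sigma> x sequentially"
    unfolding L.limitin_metric eventually_sequentially using l by (intro exI[of _ l]) auto
qed

lemma closure_char:
  assumes nc: "\<not> C2 F"
  shows "weak_top v closure_of ((\<lambda>z. {z}) ` F) = (\<lambda>z. {z}) ` (L.mtopology closure_of F)"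
proof
  show "weak_top v closure_of ((\<lambda>z. {z}) ` F) \<subseteq> (\<lambda>z. {z}) ` (L.mtopology closure_of F)"
  proof
    fix x assume x: "x \<in> weak_top v closure_of ((\<lambda>z. {z}) ` F)"
    then have xT: "x \<in> balls_T v" and
      cl: "\<And>T. x \<in> T \<Longrightarrow> openin (weak_top v) T \<Longrightarrow> \<exists>y. y \<in> (\<lambda>z. {z}) ` F \<and> y \<in> T"
      unfolding in_closure_of topspace_weak by blast+
    obtain a r where ar: "x = cb a r" "r \<in> V \<or> r = 0" using xT unfolding balls_T_iff by (elim exE conjE) simp
    show "x \<in> (\<lambda>z. {z}) ` (L.mtopology closure_of F)"
    proof (cases "r = 0")
      case True
      then have xa: "x = {a}" using ar cb0 by simp
      have "a \<in> L.mtopology closure_of F"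
        unfolding L.metric_closure_of
      proof (safe)
        fix e :: real assume e: "e > 0"
        have "x \<in> Sb [:-a, 1:] {..<e}" using xa e sing_in_T by (simp add: Sb_def)
        moreover have "openin (weak_top v) (Sb [:-a, 1:] {..<e})" by (rule open_Sb) simp
        ultimately have "\<exists>y. y \<in> (\<lambda>z. {z}) ` F \<and> y \<in> Sb [:-a, 1:] {..<e}" by (rule cl)
        then obtain y where "y \<in> (\<lambda>z. {z}) ` F" "y \<in> Sb [:-a, 1:] {..<e}" by blast
        then obtain z where "z \<in> F" "v (z - a) < e" by (auto simp: Sb_def)
        then show "\<exists>y\<in>F. y \<in> L.mball a e" using vsym[of z a] by auto
      qed simp
      then show ?thesis using xa by blast
    next
      case False
      then have r: "r \<in> V" using ar by simp
      have r0: "r > 0" using V_pos r by simp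
      obtain A where A: "finite A" "A \<subseteq> F \<inter> cb a r" "\<forall>z\<in>F \<inter> cb a r. \<exists>b\<in>A. v (z - b) < r"
        using lemA[OF nc r, of a] by auto
      define N where "N = \<Inter> (insert (Sb [:-a, 1:] {..<r / \<rho>}) ((\<lambda>b. Sb [:-b, 1:] {\<rho> * r<..}) ` A))"
      have "openin (weak_top v) N" unfolding N_def using A(1) open_Sb
        by (intro openin_Inter) auto
      moreover have "x \<in> N"
      proof -
        have "r < r / \<rho>" using r0 rho0 rho1 by (simp add: field_simps)
        moreover have "\<rho> * r < r" using r0 rho1 by simp
        moreover have "poly_abs v [:-b, 1:] x = r" if "b \<in> cb a r" for b
          using poly_abs_lin[OF r that] ar by simp
        ultimately show ?thesis unfolding N_def Sb_def using xT A(2) centre_in[of r a] r0 by auto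
      qed
      ultimately obtain y where y: "y \<in> (\<lambda>z. {z}) ` F" "y \<in> N" using cl by blast
      then obtain z where z: "y = {z}" "z \<in> F" by blast
      have "v (z - a) < r / \<rho>" using y z unfolding N_def Sb_def by simp
      then have "v (z - a) \<le> r" using disc2[OF r v_in] by blast
      then have "z \<in> F \<inter> cb a r" using z by (simp add: in_cb)
      then obtain b where b: "b \<in> A" "v (z - b) < r" using A(3) by blast
      then have "v (z - b) \<le> \<rho> * r" using disc1[OF r v_in] by blast
      moreover have "\<rho> * r < v (z - b)" using y z b unfolding N_def Sb_def by auto
      ultimately show ?thesis by simp
    qed
  qed
next
  show "(\<lambda>z. {z}) ` (L.mtopology closure_of F) \<subseteq> weak_top v closure_of ((\<lambda>z. {z}) ` F)"
  proof
    fix x assume "x \<in> (\<lambda>z. {z}) ` (L.mtopology closure_of F)"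
    then obtain w where w: "x = {w}" "w \<in> L.mtopology closure_of F" by blast
    have wcl: "\<forall>e>0. \<exists>z\<in>F. v (w - z) < e" using w(2) unfolding L.metric_closure_of by auto
    show "x \<in> weak_top v closure_of ((\<lambda>z. {z}) ` F)"
      unfolding in_closure_of topspace_weak
    proof (intro conjI allI impI)
      show "x \<in> balls_T v" using w sing_in_T by simp
      fix T assume T: "x \<in> T \<and> openin (weak_top v) T"
      then have "generate_topology_on Gen T"
        unfolding weak_eq by (simp add: openin_topology_generated_by_iff)
      then obtain d where d: "d > 0" "\<forall>z. v (z - w) < d \<longrightarrow> {z} \<in> T"
        using sing_nbhd T w(1) by blast
      then obtain z where "z \<in> F" "v (w - z) < d" using wcl by blast
      then have zF: "z \<in> F" and "v (z - w) < d" using vsym[of w z] by simp_all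
      then have "{z} \<in> T" using d by simp
      moreover have "{z} \<in> (\<lambda>z. {z}) ` F" using zF by (rule imageI)
      ultimately show "\<exists>y. y \<in> (\<lambda>z. {z}) ` F \<and> y \<in> T" by (intro exI[of _ "{z}"] conjI)
    qed
  qed
qed

lemma compact_case:
  assumes nc: "\<not> C2 F" and bd: "\<exists>M. \<forall>z\<in>F. v z \<le> M" and cpl: "complete_abs v"
  shows "compactin (strong_top v) (weak_top v closure_of ((\<lambda>z. {z}) ` F))"
proof -
  interpret Sm: Metric_space "balls_T v" "dist_T v" by (rule strong_metric)
  have st: "strong_top v = Sm.mtopology" by (simp add: strong_top_def)
  have K: "compactin L.mtopology (L.mtopology closure_of F)"
    using L.mtotally_bounded_eq_compact_closure_of[OF mcompl[OF cpl]] tb[OF nc bd] by blast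
  have cont: "continuous_map L.mtopology Sm.mtopology (\<lambda>z. {z})"
    unfolding Sm.continuous_map_to_metric
  proof (intro ballI allI impI)
    fix x e assume e: "(e::real) > 0"
    show "\<exists>U. openin L.mtopology U \<and> x \<in> U \<and> (\<forall>y\<in>U. {y} \<in> Sm.mball {x} e)"
      using e sing_in_T dist_sing by (intro exI[of _ "L.mball x e"]) auto
  qed
  show ?thesis unfolding closure_char[OF nc] st using image_compactin[OF K cont] .
qed

end

theorem proposition1p3:
  fixes v :: "'a::field \<Rightarrow> real" and F :: "'a set"
  assumes "nonarch_abs v" and "nontrivial_abs v" and "discrete_abs v" and "complete_abs v"
    and "\<exists>M. \<forall>z\<in>F. v z \<le> M"
    and "infinite F"
  shows "compactin (strong_top v) (weak_top v closure_of ((\<lambda>z. {z}) ` F))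
    \<or> (\<exists>z0 r. r > 0 \<and> r \<in> v ` (UNIV - {0}) \<and>
         (\<exists>xs :: nat \<Rightarrow> 'a. inj xs \<and> (\<forall>n. xs n \<in> F \<and> xs n \<in> cball_v v z0 r) \<and>
            limitin (weak_top v) (\<lambda>n. {xs n}) (cball_v v z0 r) sequentially))"
proof -
  obtain \<rho> where \<rho>: "0 < \<rho>" "\<rho> < 1" "v ` (UNIV - {0}) = range (\<lambda>k::int. \<rho> powi k)"
    using assms(3) unfolding discrete_abs_def by blast
  interpret vctx v \<rho> using assms(1) \<rho> by unfold_locales
  show ?thesis
  proof (cases "C2 F")
    case True
    then obtain z0 r and xs :: "nat \<Rightarrow> 'a" where H: "r \<in> V" "inj xs" "\<forall>n. xs n \<in> F \<and> xs n \<in> cball_v v z0 r"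
      "\<forall>m n. m \<noteq> n \<longrightarrow> v (xs m - xs n) = r" unfolding C2_def by auto
    have LIM: "limitin (weak_top v) (\<lambda>n. {xs n}) (cball_v v z0 r) sequentially"
      using case2[OF H(1,2) _ H(4)] H(3) by blast
    have r0: "r > 0" using V_pos H(1) by simp
    have rV: "r \<in> v ` (UNIV - {0})" using H(1) unfolding V_def .
    show ?thesis
      by (intro disjI2 exI[of _ z0] exI[of _ r] conjI r0 rV exI[of _ xs] H(2) H(3) LIM)
  next
    case False
    show ?thesis using compact_case[OF False assms(5,4)] by (rule disjI1)
  qed
qed

end
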